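(* Let $(P_t)_{t\in\mathbb{R}_+}$ be a stochastically monotone Feller semigroup on $\mathbb{R}$, $n\ge2$, $t=k2^{-m_0}$ a positive dyadic rational ($k\ge1$, $m_0\ge0$ integers), and $m\ge m_0$. Then for all $\mathbf{x},\mathbf{y}\in\overline{\mathbb{R}}^n$, $$W_1^{(n)}\left(Q^{(n),m}_t(\mathbf{x},\cdot),Q^{(n),m}_t(\mathbf{y},\cdot)\right)\le\sum_{i=1}^n|\tilde{P}_t\phi(y_i)-\tilde{P}_t\phi(x_i)|.$$
   Context: $\phi=\tanh$ on $\overline{\mathbb{R}}=[-\infty,+\infty]$ with $\phi(\pm\infty)=\pm1$; $\overline{\mathbb{R}}^n$ carries the metric $d_n(\mathbf{x},\mathbf{y})=\sum_i|\phi(y_i)-\phi(x_i)|$ and $W_1^{(n)}(\mu,\nu)=\sup\{|\int f\,d\mu-\int f\,d\nu|: f \text{ 1-Lipschitz for } d_n\}$. $\tilde{P}_t(x,B)=P_t(x,B\cap\mathbb{R})$ for $x\in\mathbb{R}$, $\tilde{P}_t(\pm\infty,\cdot)=\delta_{\pm\infty}$. For $x\in\mathbb{R}$, $F^{[-1]}_{x,t}(u)=\inf\{y\in\mathbb{R}:P_t(x,(-\infty,y])\ge u\}$, $F^{[-1]}_{\pm\infty,t}\equiv\pm\infty$; $Q^{(n)}_s(\mathbf{x},\cdot)$ is the law of $(F^{[-1]}_{x_i,s}(U))_{i\le n}$, $U$ uniform on $[0,1]$; and $Q^{(n),m}_t=[Q^{(n)}_{2^{-m}}]^{k2^{m-m_0}}$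 (iterated composition of Markov kernels). Feller: $P_t$ maps $\mathcal{C}_0(\mathbb{R})$ into itself with $\sup|P_tf-f|\to0$ as $t\to0^+$; stochastically monotone: $P_t$ maps bounded non-decreasing Borel functions to non-decreasing functions. *)

theory Defs
  imports "HOL-Probability.Probability"
begin

definition phi :: "ereal \<Rightarrow> real" where
  "phi x = (case x of ereal r \<Rightarrow> tanh r | PInfty \<Rightarrow> 1 | MInfty \<Rightarrow> -1)"

definition C0 :: "(real \<Rightarrow> real) \<Rightarrow> bool" where
  "C0 f \<longleftrightarrow> continuous_on UNIV f \<and> (f \<longlongrightarrow> 0) at_infinity"

definition Pf :: "(real \<Rightarrow> real \<Rightarrow> real measure) \<Rightarrow> real \<Rightarrow> (real \<Rightarrow> real) \<Rightarrow> real \<Rightarrow> real" where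
  "Pf P t f x = (\<integral>y. f y \<partial>(P t x))"

definition markov_semigroup :: "(real \<Rightarrow> real \<Rightarrow> real measure) \<Rightarrow> bool" where
  "markov_semigroup P \<longleftrightarrow>
     (\<forall>t\<ge>0. P t \<in> borel \<rightarrow>\<^sub>M prob_algebra borel) \<and>
     (\<forall>x. P 0 x = return borel x) \<and>
     (\<forall>s\<ge>0. \<forall>t\<ge>0. \<forall>x. P (s + t) x = (P s x \<bind> P t))"

definition feller :: "(real \<Rightarrow> real \<Rightarrow> real measure) \<Rightarrow> bool" where
  "feller P \<longleftrightarrow>
     (\<forall>t\<ge>0. \<forall>f. C0 f \<longrightarrow> C0 (Pf P t f)) \<and>
     (\<forall>f. C0 f \<longrightarrow> ((\<lambda>t. SUP x. \<bar>Pf P t f x - f x\<bar>) \<longlongrightarrow> 0) (at_right 0))"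

definition stoch_monotone :: "(real \<Rightarrow> real \<Rightarrow> real measure) \<Rightarrow> bool" where
  "stoch_monotone P \<longleftrightarrow>
     (\<forall>t\<ge>0. \<forall>f. f \<in> borel_measurable borel \<and> bounded (range f) \<and> mono f \<longrightarrow> mono (Pf P t f))"

definition Ptilde_phi :: "(real \<Rightarrow> real \<Rightarrow> real measure) \<Rightarrow> real \<Rightarrow> ereal \<Rightarrow> real" where
  "Ptilde_phi P t x = (case x of ereal r \<Rightarrow> (\<integral>y. tanh y \<partial>(P t r)) | PInfty \<Rightarrow> 1 | MInfty \<Rightarrow> -1)"

definition quantile :: "(real \<Rightarrow> real \<Rightarrow> real measure) \<Rightarrow> real \<Rightarrow> ereal \<Rightarrow> real \<Rightarrow> ereal" where
  "quantile P s x u = (case x of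
      ereal r \<Rightarrow> Inf (ereal ` {y. u \<le> measure (P s r) {..y}})
    | PInfty \<Rightarrow> \<infinity> | MInfty \<Rightarrow> -\<infinity>)"

abbreviation ERn :: "('n \<Rightarrow> ereal) measure" where
  "ERn \<equiv> (\<Pi>\<^sub>M i\<in>UNIV. (borel :: ereal measure))"

definition Qn :: "(real \<Rightarrow> real \<Rightarrow> real measure) \<Rightarrow> real \<Rightarrow> ('n \<Rightarrow> ereal) \<Rightarrow> ('n \<Rightarrow> ereal) measure" where
  "Qn P s x = distr (uniform_measure lborel {0..1::real}) ERn (\<lambda>u i. quantile P s (x i) u)"

fun kiter :: "'a measure \<Rightarrow> ('a \<Rightarrow> 'a measure) \<Rightarrow> nat \<Rightarrow> 'a \<Rightarrow> 'a measure" where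
  "kiter M K 0 x = return M x"
| "kiter M K (Suc j) x = (kiter M K j x \<bind> K)"

definition dn :: "('n::finite \<Rightarrow> ereal) \<Rightarrow> ('n \<Rightarrow> ereal) \<Rightarrow> real" where
  "dn x y = (\<Sum>i\<in>UNIV. \<bar>phi (y i) - phi (x i)\<bar>)"

definition W1 :: "('n::finite \<Rightarrow> ereal) measure \<Rightarrow> ('n \<Rightarrow> ereal) measure \<Rightarrow> real" where
  "W1 \<mu> \<nu> = Sup {\<bar>(\<integral>z. f z \<partial>\<mu>) - (\<integral>z. f z \<partial>\<nu>)\<bar> | f.
                   \<forall>a b. \<bar>f a - f b\<bar> \<le> dn a b}"

end

theory Submission
  imports Defs
begin
lemma kiter_meas:
  assumes K: "K \<in> M \<rightarrow>\<^sub>M prob_algebra M"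
  shows "kiter M K j \<in> M \<rightarrow>\<^sub>M prob_algebra M"
proof (induction j)
  case 0
  have "kiter M K 0 = return M" by (rule ext) simp
  then show ?case by simp
next
  case (Suc j)
  have "kiter M K (Suc j) = (\<lambda>x. kiter M K j x \<bind> K)" by (rule ext) simp
  then show ?case using measurable_bind_prob_space[OF Suc K] by simp
qed

lemma kiter_space:
  assumes K: "K \<in> M \<rightarrow>\<^sub>M prob_algebra M" and z: "z \<in> space M"
  shows "sets (kiter M K j z) = sets M" "prob_space (kiter M K j z)"
    "space (kiter M K j z) = space M"
proof -
  show 1: "sets (kiter M K j z) = sets M" "prob_space (kiter M K j z)"
    using measurable_space[OF kiter_meas[OF K] z, of j] by (auto simp: space_prob_algebra)
  show "space (kiter M K j z) = space M" using sets_eq_imp_space_eq[OF 1(1)] .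
qed

lemma kiter_distr:
  assumes K: "K \<in> M \<rightarrow>\<^sub>M prob_algebra M" and K': "K' \<in> N \<rightarrow>\<^sub>M prob_algebra N"
    and p: "p \<in> M \<rightarrow>\<^sub>M N"
    and comm: "\<And>z. z \<in> space M \<Longrightarrow> distr (K z) N p = K' (p z)"
    and z: "z \<in> space M"
  shows "distr (kiter M K j z) N p = kiter N K' j (p z)"
proof (induction j)
  case 0
  then show ?case using distr_return[OF p z] by simp
next
  case (Suc j)
  note sp = kiter_space[OF K z, of j]
  have ne: "space (kiter M K j z) \<noteq> {}"
    using prob_space.not_empty[OF sp(2)] .
  have K1: "K \<in> measurable (kiter M K j z) (subprob_algebra M)"
    using measurable_prob_algebraD[OF K] by (simp cong: measurable_cong_sets add: sp(1))
  have p1: "p \<in> measurable (kiter M K j z) N"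
    using p by (simp cong: measurable_cong_sets add: sp(1))
  have "distr (kiter M K (Suc j) z) N p = kiter M K j z \<bind> (\<lambda>w. distr (K w) N p)"
    using distr_bind[OF K1 ne p] by simp
  also have "\<dots> = kiter M K j z \<bind> (\<lambda>w. K' (p w))"
    by (rule bind_cong) (auto simp: sp comm)
  also have "\<dots> = distr (kiter M K j z) N p \<bind> K'"
    by (rule bind_distr[OF p1 measurable_prob_algebraD[OF K'] ne, symmetric])
  also have "\<dots> = kiter N K' (Suc j) (p z)" using Suc by simp
  finally show ?case .
qed

lemma kiter_AE:
  assumes K: "K \<in> M \<rightarrow>\<^sub>M prob_algebra M"
    and S: "Measurable.pred M S"
    and inv: "\<And>z. z \<in> space M \<Longrightarrow> S z \<Longrightarrow> AE w in K z. S w"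
    and z: "z \<in> space M" and Sz: "S z"
  shows "AE w in kiter M K j z. S w"
proof (induction j)
  case 0
  have "kiter M K 0 z = return M z" by simp
  then show ?case using AE_return[OF z S] Sz by (simp only:)
next
  case (Suc j)
  note sp = kiter_space[OF K z, of j]
  have "AE w in kiter M K j z. S w \<longrightarrow> (AE y in K w. S y)"
    by (rule AE_I2) (simp add: sp inv)
  with Suc have "AE w in kiter M K j z. AE y in K w. S y"
    by (rule AE_mp)
  moreover have K1: "K \<in> kiter M K j z \<rightarrow>\<^sub>M subprob_algebra M"
    using measurable_prob_algebraD[OF K] by (simp cong: measurable_cong_sets add: sp(1))
  ultimately show ?case
    unfolding kiter.simps using AE_bind[OF K1 S] by blast
qed

lemma phi_simps[simp]: "phi (ereal r) = tanh r" "phi \<infinity> = 1" "phi (-\<infinity>) = -1"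
  by (simp_all add: phi_def)

lemma phi_mono: "a \<le> b \<Longrightarrow> phi a \<le> phi b"
  by (cases a; cases b) (auto intro: less_imp_le[OF tanh_real_lt_1] less_imp_le[OF tanh_real_gt_neg1])

lemma phi_bound: "\<bar>phi a\<bar> \<le> 1"
  by (cases a) (auto simp: abs_le_iff intro: less_imp_le[OF tanh_real_lt_1] less_imp_le[OF tanh_real_gt_neg1])

lemma phi_isCont: "isCont phi x"
proof (cases x)
  case (real r)
  let ?A = "UNIV - {\<infinity>, -\<infinity>::ereal}"
  have opA: "open ?A" by (intro open_Diff finite_imp_closed) auto
  have "continuous_on ?A (\<lambda>v. tanh (real_of_ereal v))"
    by (rule continuous_on_compose2[OF continuous_on_tanh[OF continuous_on_id] continuous_on_real]) auto
  then have "continuous_on ?A phi"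
    by (rule continuous_on_eq) (auto simp: phi_def split: ereal.splits)
  then show ?thesis using opA real by (auto simp: continuous_on_eq_continuous_at)
next
  case PInf
  have lim: "((\<lambda>v. v) \<longlongrightarrow> (\<infinity>::ereal)) (at \<infinity>)" by (rule tendsto_ident_at)
  have "(phi \<longlongrightarrow> 1) (at \<infinity>)"
  proof (rule order_tendstoI)
    fix a :: real assume "a < 1"
    then have "eventually (\<lambda>c. a < tanh c) at_top"
      using order_tendstoD(1)[OF tanh_real_at_top] by blast
    then obtain c0 where c0: "\<And>c. c \<ge> c0 \<Longrightarrow> a < tanh c" by (auto simp: eventually_at_top_linorder)
    have "eventually (\<lambda>v. ereal c0 < v) (at (\<infinity>::ereal))"
      using lim unfolding tendsto_PInfty by blast
    then show "eventually (\<lambda>v. a < phi v) (at \<infinity>)"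
    proof (rule eventually_mono)
      fix v assume "ereal c0 < v" then show "a < phi v"
        using \<open>a < 1\<close> by (cases v) (auto intro: c0)
    qed
  next
    fix b :: real assume "1 < b"
    then show "eventually (\<lambda>v. phi v < b) (at \<infinity>)"
      using phi_bound by (auto intro!: always_eventually simp: abs_le_iff) (meson le_less_trans)
  qed
  then show ?thesis using PInf by (simp add: isCont_def)
next
  case MInf
  have lim: "((\<lambda>v. v) \<longlongrightarrow> (-\<infinity>::ereal)) (at (-\<infinity>))" by (rule tendsto_ident_at)
  have "(phi \<longlongrightarrow> -1) (at (-\<infinity>))"
  proof (rule order_tendstoI)
    fix a :: real assume "-1 < a"
    then have "eventually (\<lambda>c. tanh c < a) at_bot"
      using order_tendstoD(2)[OF tanh_real_at_bot] by blast
    then obtain c0 where c0: "\<And>c. c \<le> c0 \<Longrightarrow> tanh c < a" by (auto simp: eventually_at_bot_linorder)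
    have "eventually (\<lambda>v. v < ereal c0) (at (-\<infinity>::ereal))"
      using lim unfolding tendsto_MInfty by blast
    then show "eventually (\<lambda>v. phi v < a) (at (-\<infinity>))"
    proof (rule eventually_mono)
      fix v assume "v < ereal c0" then show "phi v < a"
        using \<open>-1 < a\<close> by (cases v) (auto intro: c0)
    qed
  next
    fix b :: real assume "b < -1"
    then show "eventually (\<lambda>v. b < phi v) (at (-\<infinity>))"
      using phi_bound by (auto intro!: always_eventually simp: abs_le_iff) (meson less_le_trans minus_le_iff)
  qed
  then show ?thesis using MInf by (simp add: isCont_def)
qed

lemma phi_cont: "continuous_on UNIV phi"
  using phi_isCont by (simp add: continuous_at_imp_continuous_on)

lemma phi_meas[measurable]: "phi \<in> borel_measurable borel"
  by (rule borel_measurable_continuous_onI[OF phi_cont])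

lemma dn_sym: "dn a b = dn b a"
  unfolding dn_def by (simp add: abs_minus_commute)

lemma lip_meas:
  fixes f :: "('n::finite \<Rightarrow> ereal) \<Rightarrow> real"
  assumes lip: "\<forall>a b. \<bar>f a - f b\<bar> \<le> dn a b"
  shows "f \<in> borel_measurable ERn"
proof -
  have "continuous_on UNIV f"
    unfolding continuous_on_def
  proof
    fix w :: "'n \<Rightarrow> ereal"
    have c: "continuous_on UNIV (\<lambda>v. dn w v)"
      unfolding dn_def
      by (intro continuous_intros continuous_on_compose2[OF phi_cont] continuous_on_product_coordinates) auto
    then have "((\<lambda>v. dn w v) \<longlongrightarrow> dn w w) (at w within UNIV)"
      by (simp add: continuous_on_def)
    then have d0: "((\<lambda>v. dn w v) \<longlongrightarrow> 0) (at w within UNIV)" by (simp add: dn_def)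
    have "((\<lambda>v. f v - f w) \<longlongrightarrow> 0) (at w within UNIV)"
    proof (rule Lim_null_comparison[OF _ d0], intro always_eventually allI)
      fix v show "norm (f v - f w) \<le> dn w v" using lip[rule_format, of v w] dn_sym[of v w] by simp
    qed
    then show "(f \<longlongrightarrow> f w) (at w within UNIV)" by (simp add: LIM_zero_iff)
  qed
  then have "f \<in> borel_measurable borel" by (rule borel_measurable_continuous_onI)
  then show ?thesis
    by (simp cong: measurable_cong_sets add: sets_PiM_equal_borel)
qed

lemma quant_le_iff:
  assumes rd: "real_distribution M"
  shows "Inf (ereal ` {y. u \<le> measure M {..y}}) \<le> ereal c \<longleftrightarrow> u \<le> measure M {..c}"
proof
  interpret real_distribution M by (rule rd)
  assume h: "Inf (ereal ` {y. u \<le> measure M {..y}}) \<le> ereal c"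
  have ev: "\<forall>d>c. u \<le> cdf M d"
  proof (intro allI impI)
    fix d assume "c < d"
    then have "Inf (ereal ` {y. u \<le> measure M {..y}}) < ereal d" using h by (meson le_less_trans ereal_less(2) less_ereal.simps(1))
    then obtain y where "u \<le> measure M {..y}" "ereal y < ereal d" by (auto simp: Inf_less_iff)
    then show "u \<le> cdf M d" using cdf_nondecreasing[of y d] by (simp add: cdf_def2)
  qed
  have lim: "(cdf M \<longlongrightarrow> cdf M c) (at_right c)"
    using cdf_is_right_cont[of c] by (simp add: continuous_within)
  have "u \<le> cdf M c"
    by (rule tendsto_lowerbound[OF lim]) (auto intro: eventually_mono[OF eventually_at_right_less] simp: ev)
  then show "u \<le> measure M {..c}" by (simp add: cdf_def2)
next
  assume "u \<le> measure M {..c}"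
  then show "Inf (ereal ` {y. u \<le> measure M {..y}}) \<le> ereal c" by (auto intro: Inf_lower)
qed

lemma quantile_inf[simp]: "quantile P s \<infinity> u = \<infinity>" "quantile P s (-\<infinity>) u = -\<infinity>"
  by (simp_all add: quantile_def)

lemma ereal_le_MInf_iff: "(a::ereal) \<le> -\<infinity> \<longleftrightarrow> (\<forall>n::nat. a \<le> ereal (- real n))"
proof (cases a)
  case (real r)
  obtain n :: nat where "-r < real n" using reals_Archimedean2 by blast
  then have "\<not> r \<le> - real n" by linarith
  then show ?thesis using real by auto
qed auto

lemma rd_kernel:
  assumes Ps: "K \<in> borel \<rightarrow>\<^sub>M prob_algebra borel"
  shows "real_distribution (K r)"
proof -
  have "K r \<in> space (prob_algebra borel)" using measurable_space[OF Ps] by simp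
  then show ?thesis by (auto simp: space_prob_algebra real_distribution_def real_distribution_axioms_def)
qed

lemma quant_meas:
  assumes Ps[measurable]: "P s \<in> borel \<rightarrow>\<^sub>M prob_algebra borel"
  shows "(\<lambda>(x, u). quantile P s x u) \<in> (borel \<Otimes>\<^sub>M borel) \<rightarrow>\<^sub>M (borel :: ereal measure)"
proof (rule borel_measurableI_le)
  fix y :: ereal
  define F where "F r c = measure (P s r) {..c}" for r c
  have Fm[measurable]: "(\<lambda>r. F r c) \<in> borel_measurable borel" for c
    unfolding F_def by measurable
  have qr: "quantile P s (ereal r) u \<le> ereal c \<longleftrightarrow> u \<le> F r c" for r u c
    unfolding quantile_def F_def by (simp add: quant_le_iff[OF rd_kernel[OF Ps]])
  show "{w \<in> space (borel \<Otimes>\<^sub>M borel). (case w of (x, u) \<Rightarrow> quantile P s x u) \<le> y} \<in> sets (borel \<Otimes>\<^sub>M borel)"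
  proof (cases y)
    case (real c)
    have key: "quantile P s x u \<le> ereal c \<longleftrightarrow> (x = -\<infinity> \<or> (x \<noteq> \<infinity> \<and> x \<noteq> -\<infinity> \<and> u \<le> F (real_of_ereal x) c))" for x u
      by (cases x) (auto simp: qr)
    have "{w \<in> space (borel \<Otimes>\<^sub>M borel). (case w of (x, u) \<Rightarrow> quantile P s x u) \<le> y}
      = {w \<in> space (borel \<Otimes>\<^sub>M borel). fst w = -\<infinity> \<or> (fst w \<noteq> \<infinity> \<and> fst w \<noteq> -\<infinity> \<and> snd w \<le> F (real_of_ereal (fst w)) c)}"
      by (auto simp: real key split: prod.splits)
    also have "\<dots> \<in> sets (borel \<Otimes>\<^sub>M borel)" by measurable
    finally show ?thesis .
  next
    case PInf
    then show ?thesis by simp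
  next
    case MInf
    have key: "quantile P s x u = -\<infinity> \<longleftrightarrow> (x = -\<infinity> \<or> (x \<noteq> \<infinity> \<and> x \<noteq> -\<infinity> \<and> (\<forall>n::nat. u \<le> F (real_of_ereal x) (- real n))))" for x u
    proof (cases x)
      case (real r) then show ?thesis using ereal_le_MInf_iff[of "quantile P s x u"] by (simp add: qr)
    qed auto
    have "{w \<in> space (borel \<Otimes>\<^sub>M borel). (case w of (x, u) \<Rightarrow> quantile P s x u) \<le> y}
      = {w \<in> space (borel \<Otimes>\<^sub>M borel). fst w = -\<infinity> \<or> (fst w \<noteq> \<infinity> \<and> fst w \<noteq> -\<infinity> \<and> (\<forall>n::nat. snd w \<le> F (real_of_ereal (fst w)) (- real n)))}"
      by (auto simp: MInf key split: prod.splits)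
    also have "\<dots> \<in> sets (borel \<Otimes>\<^sub>M borel)" by measurable
    finally show ?thesis .
  qed
qed

lemma quant_meas1[measurable]:
  assumes Ps: "P s \<in> borel \<rightarrow>\<^sub>M prob_algebra borel"
    and f[measurable]: "f \<in> M \<rightarrow>\<^sub>M borel" and g[measurable]: "g \<in> M \<rightarrow>\<^sub>M borel"
  shows "(\<lambda>w. quantile P s (f w) (g w)) \<in> M \<rightarrow>\<^sub>M (borel :: ereal measure)"
  using measurable_compose[OF measurable_Pair[OF f g] quant_meas[of P s, OF Ps]] by simp

lemma cdf_antitone:
  assumes Ps: "P s \<in> borel \<rightarrow>\<^sub>M prob_algebra borel"
    and mon: "\<forall>f. f \<in> borel_measurable borel \<and> bounded (range f) \<and> mono f \<longrightarrow> mono (Pf P s f)"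
    and "r \<le> r'"
  shows "measure (P s r') {..c} \<le> measure (P s r) {..c}"
proof -
  let ?f = "indicator {c<..} :: real \<Rightarrow> real"
  have "range ?f \<subseteq> {0, 1}" by (auto simp: indicator_def)
  then have "bounded (range ?f)" by (meson finite.emptyI finite_imp_bounded finite_insert finite_subset bounded_subset)
  moreover have "mono ?f" by (auto simp: mono_def indicator_def)
  ultimately have "mono (Pf P s ?f)" using mon by auto
  then have le: "Pf P s ?f r \<le> Pf P s ?f r'" using assms(3) by (simp add: mono_def)
  have eq: "Pf P s ?f q = 1 - measure (P s q) {..c}" for q
  proof -
    interpret real_distribution "P s q" by (rule rd_kernel[OF Ps])
    have "Pf P s ?f q = measure (P s q) {c<..}" by (simp add: Pf_def)
    moreover have "{c<..} = space (P s q) - {..c}" by auto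
    moreover have "measure (P s q) (space (P s q) - {..c}) = 1 - measure (P s q) {..c}" by (rule prob_compl) simp
    ultimately show ?thesis by simp
  qed
  show ?thesis using le by (simp add: eq)
qed

lemma quant_mono:
  assumes Ps: "P s \<in> borel \<rightarrow>\<^sub>M prob_algebra borel"
    and mon: "\<forall>f. f \<in> borel_measurable borel \<and> bounded (range f) \<and> mono f \<longrightarrow> mono (Pf P s f)"
    and "x \<le> x'"
  shows "quantile P s x u \<le> quantile P s x' u"
proof (cases x)
  case (real r)
  show ?thesis
  proof (cases x')
    case (real r')
    with \<open>x = ereal r\<close> \<open>x \<le> x'\<close> have "r \<le> r'" by simp
    have "{y. u \<le> measure (P s r') {..y}} \<subseteq> {y. u \<le> measure (P s r) {..y}}"
      using cdf_antitone[OF Ps mon \<open>r \<le> r'\<close>] by (auto intro: order_trans)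
    then show ?thesis using \<open>x = ereal r\<close> real by (auto simp: quantile_def intro!: Inf_superset_mono)
  qed (use \<open>x = ereal r\<close> \<open>x \<le> x'\<close> in \<open>auto simp: quantile_def\<close>)
next
  case PInf
  then show ?thesis using \<open>x \<le> x'\<close> by (auto simp: quantile_def)
qed (auto simp: quantile_def)

abbreviation "Uu \<equiv> uniform_measure lborel {0..1::real}"

lemma prob_Uu: "prob_space Uu"
  by (rule prob_space_uniform_measure) auto

lemma U_restrict:
  assumes h: "h \<in> borel \<rightarrow>\<^sub>M N"
  shows "distr Uu N h = distr (restrict_space lborel {0<..<1::real}) N h"
proof (rule measure_eqI)
  show "sets (distr Uu N h) = sets (distr (restrict_space lborel {0<..<1::real}) N h)" by simp
  fix A assume "A \<in> sets (distr Uu N h)"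
  then have A: "A \<in> sets N" by simp
  have hU: "h \<in> Uu \<rightarrow>\<^sub>M N" using h by (simp cong: measurable_cong_sets)
  have hR: "h \<in> restrict_space lborel {0<..<1::real} \<rightarrow>\<^sub>M N"
    using h by (intro measurable_restrict_space1) (simp cong: measurable_cong_sets)
  have hA: "h -` A \<in> sets borel"
    using measurable_sets[OF h A] by simp
  have "emeasure (distr Uu N h) A = emeasure lborel ({0..1} \<inter> h -` A)"
    using hA by (simp add: emeasure_distr[OF hU A] divide_ennreal_def)
  also have "\<dots> = emeasure lborel ({0<..<1} \<inter> h -` A)"
  proof (rule emeasure_eq_AE)
    show "AE x in lborel. x \<in> {0..1} \<inter> h -` A \<longleftrightarrow> x \<in> {0<..<1} \<inter> h -` A"
      using AE_lborel_singleton[of "0::real"] AE_lborel_singleton[of "1::real"]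
      by eventually_elim auto
  qed (use hA in auto)
  also have "\<dots> = emeasure lborel (h -` A \<inter> {0<..<1})" by (simp add: Int_commute)
  also have "\<dots> = emeasure (restrict_space lborel {0<..<1::real}) (h -` A \<inter> {0<..<1})"
    by (rule emeasure_restrict_space[symmetric]) auto
  also have "\<dots> = emeasure (distr (restrict_space lborel {0<..<1::real}) N h) A"
    by (simp add: emeasure_distr[OF hR A] space_restrict_space)
  finally show "emeasure (distr Uu N h) A = emeasure (distr (restrict_space lborel {0<..<1::real}) N h) A" .
qed

lemma quant_distr:
  assumes rd: "real_distribution M"
    and hm: "(\<lambda>u. Inf (ereal ` {y. u \<le> measure M {..y}})) \<in> borel \<rightarrow>\<^sub>M borel"
  shows "distr Uu borel (\<lambda>u. Inf (ereal ` {y. u \<le> measure M {..y}})) = distr M borel ereal"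
proof -
  interpret cdf_distribution M using rd by (rule cdf_distribution.intro)
  let ?q = "\<lambda>u. Inf (ereal ` {y. u \<le> measure M {..y}})"
  let ?R = "restrict_space lborel {0<..<1::real}"
  have eq: "?q u = ereal (I u)" if u: "u \<in> {0<..<1}" for u
  proof -
    have iff: "?q u \<le> ereal c \<longleftrightarrow> I u \<le> c" for c
    proof -
      have "0 < u" "u < 1" using u by auto
      then show ?thesis using quant_le_iff[OF rd, of u c] pseudoinverse[of u c] unfolding cdf_def2 by simp
    qed
    show ?thesis
    proof (rule antisym)
      show "?q u \<le> ereal (I u)" using iff[of "I u"] by (simp only: order_refl)
      show "ereal (I u) \<le> ?q u"
      proof (rule ccontr)
        assume "\<not> ereal (I u) \<le> ?q u"
        then have "?q u < ereal (I u)" by (simp only: not_le)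
        then obtain z where "?q u < ereal z" "ereal z < ereal (I u)" using ereal_dense2 by blast
        then show False using iff[of z] by (meson ereal_less_eq(3) less_imp_le not_le)
      qed
    qed
  qed
  have "sets ?R = sets (restrict_space borel {0<..<1::real})" by (rule sets_restrict_space_cong) simp
  then have Im: "I \<in> ?R \<rightarrow>\<^sub>M borel"
    using measurable_CI by (subst measurable_cong_sets[OF _ refl])
  have "distr Uu borel ?q = distr ?R borel ?q" by (rule U_restrict[OF hm])
  also have "\<dots> = distr ?R borel (\<lambda>u. ereal (I u))"
    by (rule distr_cong) (auto simp: space_restrict_space eq)
  also have "\<dots> = distr (distr ?R borel I) borel ereal"
    by (subst distr_distr[OF _ Im]) (simp_all add: comp_def)
  also have "distr ?R borel I = M"
    by (rule distr_I_eq_M)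
  finally show ?thesis .
qed

definition qk :: "(real \<Rightarrow> real \<Rightarrow> real measure) \<Rightarrow> real \<Rightarrow> ereal \<Rightarrow> ereal measure" where
  "qk P s r = distr Uu borel (\<lambda>u. quantile P s r u)"

lemma Uu_space: "Uu \<in> space (prob_algebra Uu)"
  using prob_Uu by (simp add: space_prob_algebra)

lemma Qn_map_meas:
  assumes Ps: "P s \<in> borel \<rightarrow>\<^sub>M prob_algebra borel"
  shows "(\<lambda>(x, u). (\<lambda>i. quantile P s (x i) u)) \<in> ((ERn :: ('n \<Rightarrow> ereal) measure) \<Otimes>\<^sub>M Uu) \<rightarrow>\<^sub>M ERn"
proof -
  have sU: "sets ((ERn :: ('n \<Rightarrow> ereal) measure) \<Otimes>\<^sub>M Uu) = sets (ERn \<Otimes>\<^sub>M (borel :: real measure))"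
    by (rule sets_pair_measure_cong) simp_all
  have "(\<lambda>w. (\<lambda>i. quantile P s (fst w i) (snd w))) \<in> ((ERn :: ('n \<Rightarrow> ereal) measure) \<Otimes>\<^sub>M (borel :: real measure)) \<rightarrow>\<^sub>M ERn"
  proof (rule measurable_PiM_single')
    fix i :: 'n
    show "(\<lambda>w. quantile P s (fst w i) (snd w)) \<in> ((ERn :: ('n \<Rightarrow> ereal) measure) \<Otimes>\<^sub>M (borel :: real measure)) \<rightarrow>\<^sub>M borel"
      by (rule quant_meas1[of P s, OF Ps]) measurable
  qed auto
  then show ?thesis
    by (simp add: measurable_cong_sets[OF sU refl] split_beta')
qed

lemma Qn_meas:
  assumes Ps: "P s \<in> borel \<rightarrow>\<^sub>M prob_algebra borel"
  shows "Qn P s \<in> (ERn :: ('n \<Rightarrow> ereal) measure) \<rightarrow>\<^sub>M prob_algebra ERn"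
proof -
  have "(\<lambda>x :: 'n \<Rightarrow> ereal. distr Uu ERn (\<lambda>u i. quantile P s (x i) u)) \<in> ERn \<rightarrow>\<^sub>M prob_algebra ERn"
    by (rule measurable_distr_prob_space2[OF measurable_const[OF Uu_space]])
       (use Qn_map_meas[of P s, OF Ps] in \<open>simp add: split_beta'\<close>)
  moreover have "Qn P s = (\<lambda>x :: 'n \<Rightarrow> ereal. distr Uu ERn (\<lambda>u i. quantile P s (x i) u))"
    by (rule ext) (simp add: Qn_def)
  ultimately show ?thesis by simp
qed

lemma Qn_single_meas:
  assumes Ps: "P s \<in> borel \<rightarrow>\<^sub>M prob_algebra borel"
  shows "(\<lambda>u i. quantile P s (z i) u) \<in> Uu \<rightarrow>\<^sub>M ERn"
  using measurable_Pair2[OF Qn_map_meas[of P s, OF Ps], of z] by (simp add: space_PiM)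

lemma qk_meas:
  assumes Ps: "P s \<in> borel \<rightarrow>\<^sub>M prob_algebra borel"
  shows "qk P s \<in> borel \<rightarrow>\<^sub>M prob_algebra borel"
proof -
  have "(\<lambda>x. distr Uu borel (\<lambda>u. quantile P s x u)) \<in> borel \<rightarrow>\<^sub>M prob_algebra borel"
    by (rule measurable_distr_prob_space2[OF measurable_const[OF Uu_space]])
       (use quant_meas[of P s, OF Ps] in \<open>simp add: measurable_cong_sets[OF sets_pair_measure_cong[OF refl sets_uniform_measure] refl]\<close>)
  moreover have "qk P s = (\<lambda>x. distr Uu borel (\<lambda>u. quantile P s x u))"
    by (rule ext) (simp add: qk_def)
  ultimately show ?thesis by simp
qed

lemma Qn_proj:
  assumes Ps: "P s \<in> borel \<rightarrow>\<^sub>M prob_algebra borel"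
  shows "distr (Qn P s z) ERn (\<lambda>w i. w (g i)) = Qn P s (\<lambda>i. z (g i))"
proof -
  have pm: "(\<lambda>w i. w (g i)) \<in> ERn \<rightarrow>\<^sub>M ERn"
    by (rule measurable_PiM_single') auto
  show ?thesis unfolding Qn_def
    by (subst distr_distr[OF pm Qn_single_meas[of P s, OF Ps]]) (simp add: comp_def)
qed

lemma Qn_marg:
  assumes Ps: "P s \<in> borel \<rightarrow>\<^sub>M prob_algebra borel"
  shows "distr (Qn P s z) borel (\<lambda>w. w j) = qk P s (z j)"
proof -
  have pm: "(\<lambda>w. w j) \<in> ERn \<rightarrow>\<^sub>M borel" by measurable
  show ?thesis unfolding Qn_def qk_def
    by (subst distr_distr[OF pm Qn_single_meas[of P s, OF Ps]]) (simp add: comp_def)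
qed

lemma qk_real:
  assumes Ps: "P s \<in> borel \<rightarrow>\<^sub>M prob_algebra borel"
  shows "qk P s (ereal r) = distr (P s r) borel ereal"
proof -
  have hm: "(\<lambda>u. quantile P s (ereal r) u) \<in> borel \<rightarrow>\<^sub>M borel"
    by (rule quant_meas1[of P s, OF Ps]) simp_all
  have eq: "(\<lambda>u. quantile P s (ereal r) u) = (\<lambda>u. Inf (ereal ` {y. u \<le> measure (P s r) {..y}}))"
    by (simp add: quantile_def)
  show ?thesis unfolding qk_def eq
    by (rule quant_distr[OF rd_kernel[of "P s", OF Ps]]) (use hm eq in simp)
qed

lemma qk_inf:
  shows "qk P s \<infinity> = return borel \<infinity>" "qk P s (-\<infinity>) = return borel (-\<infinity>)"
proof -
  interpret prob_space Uu by (rule prob_Uu)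
  show "qk P s \<infinity> = return borel \<infinity>" "qk P s (-\<infinity>) = return borel (-\<infinity>)"
    by (simp_all add: qk_def)
qed

lemma kiter_qk_inf:
  assumes Ps: "P s \<in> borel \<rightarrow>\<^sub>M prob_algebra borel" and c: "c = \<infinity> \<or> c = -\<infinity>"
  shows "kiter borel (qk P s) j c = return borel c"
proof (induction j)
  case (Suc j)
  have "kiter borel (qk P s) (Suc j) c = return borel c \<bind> qk P s" using Suc by simp
  also have "\<dots> = qk P s c" by (rule bind_return[OF measurable_prob_algebraD[OF qk_meas[of P s, OF Ps]]]) simp
  finally show ?case using c qk_inf by auto
qed simp

lemma kiter_qk_real:
  assumes sg: "markov_semigroup P" and s: "s \<ge> 0"
  shows "kiter borel (qk P s) j (ereal r) = distr (P (real j * s) r) borel ereal"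
proof (induction j)
  case 0
  have "P 0 r = return borel r" using sg by (simp add: markov_semigroup_def)
  then show ?case by (simp add: distr_return)
next
  case (Suc j)
  have Pm: "P t \<in> borel \<rightarrow>\<^sub>M prob_algebra borel" if "t \<ge> 0" for t
    using sg that by (simp add: markov_semigroup_def)
  have js: "real j * s \<ge> 0" using s by simp
  have Ps: "P s \<in> borel \<rightarrow>\<^sub>M prob_algebra borel" using Pm[OF s] .
  let ?M = "P (real j * s) r"
  have rdM: "real_distribution ?M" by (rule rd_kernel[OF Pm[OF js]])
  then have sM: "sets ?M = sets borel" and neM: "space ?M \<noteq> {}"
    by (auto simp: real_distribution_def real_distribution_axioms_def prob_space.not_empty)
  have em: "ereal \<in> ?M \<rightarrow>\<^sub>M borel" by (simp add: measurable_cong_sets[OF sM refl])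
  have Psm: "P s \<in> ?M \<rightarrow>\<^sub>M subprob_algebra borel"
    using measurable_prob_algebraD[OF Ps] by (simp add: measurable_cong_sets[OF sM refl])
  have "kiter borel (qk P s) (Suc j) (ereal r) = distr ?M borel ereal \<bind> qk P s" using Suc by simp
  also have "\<dots> = ?M \<bind> (\<lambda>y. qk P s (ereal y))"
    by (rule bind_distr[OF em measurable_prob_algebraD[OF qk_meas[of P s, OF Ps]] neM])
  also have "\<dots> = ?M \<bind> (\<lambda>y. distr (P s y) borel ereal)"
    by (rule bind_cong) (simp_all add: qk_real[of P s, OF Ps])
  also have "\<dots> = distr (?M \<bind> P s) borel ereal"
    by (rule distr_bind[OF Psm neM, symmetric]) simp
  also have "?M \<bind> P s = P (real j * s + s) r"
    using sg js s by (simp add: markov_semigroup_def)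
  also have "real j * s + s = real (Suc j) * s" by (simp add: algebra_simps)
  finally show ?case .
qed

lemma integral_phi_kiter:
  assumes sg: "markov_semigroup P" and s: "s \<ge> 0"
  shows "(\<integral>v. phi v \<partial>kiter borel (qk P s) j c) = Ptilde_phi P (real j * s) c"
proof -
  have Ps: "P s \<in> borel \<rightarrow>\<^sub>M prob_algebra borel" using sg s by (simp add: markov_semigroup_def)
  have js: "real j * s \<ge> 0" using s by simp
  have Pm: "P (real j * s) \<in> borel \<rightarrow>\<^sub>M prob_algebra borel" using sg js by (simp add: markov_semigroup_def)
  show ?thesis
  proof (cases c)
    case (real r)
    have sM: "sets (P (real j * s) r) = sets borel"
      using rd_kernel[OF Pm] by (auto simp: real_distribution_def real_distribution_axioms_def)
    have em: "ereal \<in> P (real j * s) r \<rightarrow>\<^sub>M borel" by (simp add: measurable_cong_sets[OF sM refl])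
    show ?thesis using real
      by (simp add: kiter_qk_real[OF sg s] integral_distr[OF em phi_meas] Ptilde_phi_def)
  next
    case PInf
    then show ?thesis by (simp add: kiter_qk_inf[of P s, OF Ps] integral_return Ptilde_phi_def)
  next
    case MInf
    then show ?thesis by (simp add: kiter_qk_inf[of P s, OF Ps] integral_return Ptilde_phi_def)
  qed
qed

lemma dn_le: "dn (a :: 'n::finite \<Rightarrow> ereal) b \<le> 2 * real CARD('n)"
proof -
  have "dn a b \<le> (\<Sum>i\<in>(UNIV::'n set). 2)"
    unfolding dn_def
  proof (rule sum_mono)
    fix i show "\<bar>phi (b i) - phi (a i)\<bar> \<le> 2" using phi_bound[of "b i"] phi_bound[of "a i"] by linarith
  qed
  then show ?thesis by simp
qed

lemma proj_meas: "(\<lambda>w i. w (g i)) \<in> (ERn :: ('m \<Rightarrow> ereal) measure) \<rightarrow>\<^sub>M (ERn :: ('n \<Rightarrow> ereal) measure)"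
  by (rule measurable_PiM_single') auto

lemma main_bound:
  fixes x y :: "'n::finite \<Rightarrow> ereal" and f :: "('n \<Rightarrow> ereal) \<Rightarrow> real"
  assumes sg: "markov_semigroup P" and s0: "s \<ge> 0"
    and mon: "\<forall>f. f \<in> borel_measurable borel \<and> bounded (range f) \<and> mono f \<longrightarrow> mono (Pf P s f)"
    and lip: "\<forall>a b. \<bar>f a - f b\<bar> \<le> dn a b"
  shows "(\<integral>w. f w \<partial>kiter ERn (Qn P s) N x) - (\<integral>w. f w \<partial>kiter ERn (Qn P s) N y)
    \<le> (\<Sum>i\<in>UNIV. \<bar>Ptilde_phi P (real N * s) (y i) - Ptilde_phi P (real N * s) (x i)\<bar>)"
proof -
  have Ps: "P s \<in> borel \<rightarrow>\<^sub>M prob_algebra borel" using sg s0 by (simp add: markov_semigroup_def)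
  have K2m: "Qn P s \<in> (ERn :: ('n + 'n \<Rightarrow> ereal) measure) \<rightarrow>\<^sub>M prob_algebra ERn"
    by (rule Qn_meas[of P s, OF Ps])
  have Km: "Qn P s \<in> (ERn :: ('n \<Rightarrow> ereal) measure) \<rightarrow>\<^sub>M prob_algebra ERn"
    by (rule Qn_meas[of P s, OF Ps])
  define z0 :: "'n + 'n \<Rightarrow> ereal" where "z0 = case_sum x y"
  define \<nu> where "\<nu> = kiter ERn (Qn P s) N z0"
  have z0sp: "z0 \<in> space ERn" by (simp add: space_PiM)
  note \<nu>sp = kiter_space[OF K2m z0sp, of N, folded \<nu>_def]
  interpret \<nu>: prob_space \<nu> by (rule \<nu>sp(2))
  have mcong: "g \<in> borel_measurable \<nu> \<longleftrightarrow> g \<in> borel_measurable ERn" for g :: "('n + 'n \<Rightarrow> ereal) \<Rightarrow> real"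
    by (simp add: measurable_def \<nu>sp(1) \<nu>sp(3))
  have mcong2: "h \<in> \<nu> \<rightarrow>\<^sub>M M' \<longleftrightarrow> h \<in> ERn \<rightarrow>\<^sub>M M'" for h :: "('n + 'n \<Rightarrow> ereal) \<Rightarrow> 'z" and M'
    by (simp add: measurable_def \<nu>sp(1) \<nu>sp(3))
  have muL: "kiter ERn (Qn P s) N x = distr \<nu> ERn (\<lambda>w i. w (Inl i))"
    unfolding \<nu>_def using kiter_distr[OF K2m Km proj_meas Qn_proj[of P s, OF Ps] z0sp, of N]
    by (simp add: z0_def)
  have muR: "kiter ERn (Qn P s) N y = distr \<nu> ERn (\<lambda>w i. w (Inr i))"
    unfolding \<nu>_def using kiter_distr[OF K2m Km proj_meas Qn_proj[of P s, OF Ps] z0sp, of N]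
    by (simp add: z0_def)
  have marg: "distr \<nu> borel (\<lambda>w. w j) = kiter borel (qk P s) N (z0 j)" for j
    unfolding \<nu>_def
    by (rule kiter_distr[OF K2m qk_meas[of P s, OF Ps] _ Qn_marg[of P s, OF Ps] z0sp]) measurable
  have Pt: "(\<integral>w. phi (w j) \<partial>\<nu>) = Ptilde_phi P (real N * s) (z0 j)" for j
  proof -
    have "(\<integral>w. phi (w j) \<partial>\<nu>) = (\<integral>v. phi v \<partial>distr \<nu> borel (\<lambda>w. w j))"
      by (rule integral_distr[symmetric]) (simp_all add: mcong2)
    also have "\<dots> = Ptilde_phi P (real N * s) (z0 j)"
      unfolding marg by (rule integral_phi_kiter[OF sg s0])
    finally show ?thesis .
  qed
  define S where "S w \<longleftrightarrow> (\<forall>i. (x i \<le> y i \<longrightarrow> w (Inl i) \<le> w (Inr i)) \<and> (y i \<le> x i \<longrightarrow> w (Inr i) \<le> w (Inl i)))"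
    for w :: "'n + 'n \<Rightarrow> ereal"
  have le: "Measurable.pred ERn (\<lambda>w. w a \<le> w b)" for a b :: "'n + 'n"
    unfolding pred_def by (rule borel_measurable_le) simp_all
  have cst: "Measurable.pred ERn (\<lambda>w. c)" for c :: bool by (cases c) simp_all
  have Sm: "Measurable.pred ERn S" unfolding S_def
    by (intro pred_intros_countable(1) pred_intros_logic(3) pred_intros_logic(4) le cst)
  have AES: "AE w in \<nu>. S w"
    unfolding \<nu>_def
  proof (rule kiter_AE[OF K2m Sm _ z0sp])
    show "S z0" by (auto simp: S_def z0_def)
    fix z assume "z \<in> space ERn" "S z"
    have sets: "{w \<in> space ERn. S w} \<in> sets ERn" using Sm by measurable
    have "AE u in Uu. S (\<lambda>i. quantile P s (z i) u)"
      using \<open>S z\<close> by (auto simp: S_def intro!: AE_I2 quant_mono[OF Ps mon])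
    then show "AE w in Qn P s z. S w"
      unfolding Qn_def by (simp add: AE_distr_iff[OF Qn_single_meas[of P s, OF Ps] sets])
  qed
  have fm: "f \<in> borel_measurable ERn" by (rule lip_meas[OF lip])
  define B where "B = \<bar>f (\<lambda>_. 0)\<bar> + 2 * real CARD('n)"
  have fB: "\<bar>f v\<bar> \<le> B" for v
    using lip[rule_format, of v "\<lambda>_. 0"] dn_le[of v "\<lambda>_. 0"] unfolding B_def by linarith
  have intf: "integrable \<nu> (\<lambda>w. f (\<lambda>i. w (g i)))" for g :: "'n \<Rightarrow> 'n + 'n"
  proof (rule \<nu>.integrable_const_bound[where B=B])
    show "AE w in \<nu>. norm (f (\<lambda>i. w (g i))) \<le> B" using fB by simp
    show "(\<lambda>w. f (\<lambda>i. w (g i))) \<in> borel_measurable \<nu>"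
      unfolding mcong by (rule measurable_compose[OF proj_meas fm])
  qed
  have phim: "(\<lambda>w. phi (w j)) \<in> borel_measurable \<nu>" for j
    unfolding mcong by measurable
  have intphi: "integrable \<nu> (\<lambda>w. phi (w j))" for j
    by (rule \<nu>.integrable_const_bound[where B=1]) (use phi_bound phim in auto)
  have intabs: "integrable \<nu> (\<lambda>w. \<bar>phi (w (Inr i)) - phi (w (Inl i))\<bar>)" for i
    using intphi by auto
  have "(\<integral>w. f w \<partial>kiter ERn (Qn P s) N x) - (\<integral>w. f w \<partial>kiter ERn (Qn P s) N y)
      = (\<integral>w. f (\<lambda>i. w (Inl i)) \<partial>\<nu>) - (\<integral>w. f (\<lambda>i. w (Inr i)) \<partial>\<nu>)"
  proof -
    have pL: "(\<lambda>w i. w (Inl i)) \<in> \<nu> \<rightarrow>\<^sub>M (ERn :: ('n \<Rightarrow> ereal) measure)"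
      unfolding mcong2 by (rule proj_meas)
    have pR: "(\<lambda>w i. w (Inr i)) \<in> \<nu> \<rightarrow>\<^sub>M (ERn :: ('n \<Rightarrow> ereal) measure)"
      unfolding mcong2 by (rule proj_meas)
    show ?thesis unfolding muL muR integral_distr[OF pL fm] integral_distr[OF pR fm] ..
  qed
  also have "\<dots> = (\<integral>w. f (\<lambda>i. w (Inl i)) - f (\<lambda>i. w (Inr i)) \<partial>\<nu>)"
    by (rule Bochner_Integration.integral_diff[OF intf[of Inl] intf[of Inr], symmetric])
  also have "\<dots> \<le> (\<integral>w. (\<Sum>i\<in>UNIV. \<bar>phi (w (Inr i)) - phi (w (Inl i))\<bar>) \<partial>\<nu>)"
  proof (rule integral_mono)
    show "integrable \<nu> (\<lambda>w. f (\<lambda>i. w (Inl i)) - f (\<lambda>i. w (Inr i)))" using intf by auto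
    show "integrable \<nu> (\<lambda>w. \<Sum>i\<in>UNIV. \<bar>phi (w (Inr i)) - phi (w (Inl i))\<bar>)"
      using intabs by auto
    fix w
    show "f (\<lambda>i. w (Inl i)) - f (\<lambda>i. w (Inr i)) \<le> (\<Sum>i\<in>UNIV. \<bar>phi (w (Inr i)) - phi (w (Inl i))\<bar>)"
      using lip[rule_format, of "\<lambda>i. w (Inl i)" "\<lambda>i. w (Inr i)"] by (simp add: dn_def)
  qed
  also have "\<dots> = (\<Sum>i\<in>UNIV. (\<integral>w. \<bar>phi (w (Inr i)) - phi (w (Inl i))\<bar> \<partial>\<nu>))"
    by (rule Bochner_Integration.integral_sum) (rule intabs)
  also have "\<dots> \<le> (\<Sum>i\<in>UNIV. \<bar>Ptilde_phi P (real N * s) (y i) - Ptilde_phi P (real N * s) (x i)\<bar>)"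
  proof (rule sum_mono)
    fix i
    have PX: "(\<integral>w. phi (w (Inl i)) \<partial>\<nu>) = Ptilde_phi P (real N * s) (x i)" using Pt[of "Inl i"] by (simp add: z0_def)
    have PY: "(\<integral>w. phi (w (Inr i)) \<partial>\<nu>) = Ptilde_phi P (real N * s) (y i)" using Pt[of "Inr i"] by (simp add: z0_def)
    show "(\<integral>w. \<bar>phi (w (Inr i)) - phi (w (Inl i))\<bar> \<partial>\<nu>) \<le> \<bar>Ptilde_phi P (real N * s) (y i) - Ptilde_phi P (real N * s) (x i)\<bar>"
    proof (cases "x i \<le> y i")
      case True
      have "(\<integral>w. \<bar>phi (w (Inr i)) - phi (w (Inl i))\<bar> \<partial>\<nu>) = (\<integral>w. phi (w (Inr i)) - phi (w (Inl i)) \<partial>\<nu>)"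
      proof (rule integral_cong_AE)
        show "AE w in \<nu>. \<bar>phi (w (Inr i)) - phi (w (Inl i))\<bar> = phi (w (Inr i)) - phi (w (Inl i))"
          using AES by eventually_elim (use True phi_mono in \<open>auto simp: S_def\<close>)
      qed (use phim in auto)
      also have "\<dots> = Ptilde_phi P (real N * s) (y i) - Ptilde_phi P (real N * s) (x i)"
        by (simp add: Bochner_Integration.integral_diff[OF intphi intphi] PX PY)
      finally show ?thesis by simp
    next
      case False
      then have yx: "y i \<le> x i" by simp
      have "(\<integral>w. \<bar>phi (w (Inr i)) - phi (w (Inl i))\<bar> \<partial>\<nu>) = (\<integral>w. phi (w (Inl i)) - phi (w (Inr i)) \<partial>\<nu>)"
      proof (rule integral_cong_AE)
        show "AE w in \<nu>. \<bar>phi (w (Inr i)) - phi (w (Inl i))\<bar> = phi (w (Inl i)) - phi (w (Inr i))"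
          using AES by eventually_elim (use yx phi_mono in \<open>auto simp: S_def\<close>)
      qed (use phim in auto)
      also have "\<dots> = Ptilde_phi P (real N * s) (x i) - Ptilde_phi P (real N * s) (y i)"
        by (simp add: Bochner_Integration.integral_diff[OF intphi intphi] PX PY)
      finally show ?thesis by simp
    qed
  qed
  finally show ?thesis .
qed

theorem proposition3p3:
  fixes P :: "real \<Rightarrow> real \<Rightarrow> real measure"
    and k m0 m :: nat
    and x y :: "'n::finite \<Rightarrow> ereal"
  assumes "markov_semigroup P" and "feller P" and "stoch_monotone P"
    and "CARD('n) \<ge> 2"
    and "k \<ge> 1" and "m \<ge> m0"
  shows "W1 (kiter ERn (Qn P (1 / 2 ^ m)) (k * 2 ^ (m - m0)) x)
            (kiter ERn (Qn P (1 / 2 ^ m)) (k * 2 ^ (m - m0)) y)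
         \<le> (\<Sum>i\<in>UNIV. \<bar>Ptilde_phi P (real k / 2 ^ m0) (y i) - Ptilde_phi P (real k / 2 ^ m0) (x i)\<bar>)"
proof -
  define s :: real where "s = 1 / 2 ^ m"
  define N where "N = k * 2 ^ (m - m0)"
  have s0: "s \<ge> 0" by (simp add: s_def)
  have mon: "\<forall>f. f \<in> borel_measurable borel \<and> bounded (range f) \<and> mono f \<longrightarrow> mono (Pf P s f)"
    using assms(3) s0 unfolding stoch_monotone_def by blast
  have tN: "real k / 2 ^ m0 = real N * s"
  proof -
    have "(2::real) ^ m = 2 ^ (m - m0) * 2 ^ m0" using assms(6) by (simp add: power_add[symmetric])
    then show ?thesis by (simp add: N_def s_def field_simps)
  qed
  define R where "R = (\<Sum>i\<in>UNIV. \<bar>Ptilde_phi P (real N * s) (y i) - Ptilde_phi P (real N * s) (x i)\<bar>)"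
  have bound: "\<bar>(\<integral>w. f w \<partial>kiter ERn (Qn P s) N x) - (\<integral>w. f w \<partial>kiter ERn (Qn P s) N y)\<bar> \<le> R"
    if lip: "\<forall>a b. \<bar>f a - f b\<bar> \<le> dn a b" for f :: "('n \<Rightarrow> ereal) \<Rightarrow> real"
  proof -
    have 1: "(\<integral>w. f w \<partial>kiter ERn (Qn P s) N x) - (\<integral>w. f w \<partial>kiter ERn (Qn P s) N y) \<le> R"
      unfolding R_def by (rule main_bound[OF assms(1) s0 mon lip])
    have lip': "\<forall>a b. \<bar>(- f a) - (- f b)\<bar> \<le> dn a b" using lip by (simp add: abs_minus_commute)
    have 2: "(\<integral>w. - f w \<partial>kiter ERn (Qn P s) N x) - (\<integral>w. - f w \<partial>kiter ERn (Qn P s) N y) \<le> R"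
      unfolding R_def by (rule main_bound[OF assms(1) s0 mon lip'])
    have "(\<integral>w. - f w \<partial>kiter ERn (Qn P s) N x) = - (\<integral>w. f w \<partial>kiter ERn (Qn P s) N x)"
      by (rule Bochner_Integration.integral_minus)
    moreover have "(\<integral>w. - f w \<partial>kiter ERn (Qn P s) N y) = - (\<integral>w. f w \<partial>kiter ERn (Qn P s) N y)"
      by (rule Bochner_Integration.integral_minus)
    ultimately show ?thesis using 1 2 by linarith
  qed
  have "W1 (kiter ERn (Qn P s) N x) (kiter ERn (Qn P s) N y) \<le> R"
    unfolding W1_def
  proof (rule cSup_least)
    let ?g = "\<lambda>f :: ('n \<Rightarrow> ereal) \<Rightarrow> real. \<bar>(\<integral>z. f z \<partial>kiter ERn (Qn P s) N x) - (\<integral>z. f z \<partial>kiter ERn (Qn P s) N y)\<bar>"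
    have z: "\<forall>a b. \<bar>(\<lambda>_. 0::real) a - (\<lambda>_. 0) b\<bar> \<le> dn a b" by (simp add: dn_def sum_nonneg)
    have mem: "?g (\<lambda>_. 0) \<in> {?g f | f. \<forall>a b. \<bar>f a - f b\<bar> \<le> dn a b}"
      by (rule CollectI, rule exI[where x="\<lambda>_. 0::real"]) (simp only: z simp_thms)
    then show "{?g f | f. \<forall>a b. \<bar>f a - f b\<bar> \<le> dn a b} \<noteq> {}" by blast
  next
    let ?g = "\<lambda>f :: ('n \<Rightarrow> ereal) \<Rightarrow> real. \<bar>(\<integral>z. f z \<partial>kiter ERn (Qn P s) N x) - (\<integral>z. f z \<partial>kiter ERn (Qn P s) N y)\<bar>"
    fix r assume "r \<in> {?g f | f. \<forall>a b. \<bar>f a - f b\<bar> \<le> dn a b}"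
    then obtain f where r: "r = ?g f" and l: "\<forall>a b. \<bar>f a - f b\<bar> \<le> dn a b" by (auto simp only: mem_Collect_eq)
    show "r \<le> R" unfolding r by (rule bound[OF l])
  qed
  then show ?thesis unfolding tN R_def s_def N_def .
qed

end
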